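(* Let $t\ge1$, $i\ge0$ integers, let $h:\mathbb{F}_{2^t}\to\mathbb{F}_{2^t}$ be any function, and let $f:\mathbb{F}_{2^t}\times\mathbb{F}_{2^t}\to\mathbb{F}_2$ be $f(x,y)=Tr_1^t(xy^{2^i}+h(y))$. Then $f$ is negabent if and only if $y\mapsto Tr_1^t(h(y))$ is a bent function on $\mathbb{F}_{2^t}$.
   Context: $Tr_1^t$ is the absolute trace of $\mathbb{F}_{2^t}$. Fix a self-dual basis $\{\alpha_1,\dots,\alpha_t\}$ of $\mathbb{F}_{2^t}$ over $\mathbb{F}_2$ ($Tr_1^t(\alpha_i\alpha_j)=\delta_{ij}$) and identify $\mathbb{F}_{2^t}\times\mathbb{F}_{2^t}$ with $\mathbb{F}_2^{2t}$ via coordinates; let $wt(x,y)$ be the number of nonzero coordinates. $g:\mathbb{F}_{2^t}\times\mathbb{F}_{2^t}\to\mathbb{F}_2$ is negabent if $\left|\sum_{(x,y)}(-1)^{g(x,y)+Tr_1^t(ax)+Tr_1^t(by)}\,\mathrm{i}^{wt(x,y)}\right|=2^{t}$ for all $(a,b)$ ($\mathrm{i}=\sqrt{-1}$). A function $u:\mathbb{F}_{2^t}\to\mathbb{F}_2$ is bent if $\left|\sum_{y}(-1)^{u(y)+Tr_1^t(\mu y)}\right|=2^{t/2}$ for all $\mu\in\mathbb{F}_{2^t}$ (equivalently, $\sum_y(-1)^{u(y)+u(y+b)}=0$ for all $b\neq0$). *)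

theory Defs
  imports Complex_Main
begin

text \<open>The field F_(2^t) is modelled by a finite field type 'a with CARD('a) = 2^t.
  F_2 is modelled by bool (True = 1).\<close>

definition tr :: "nat \<Rightarrow> 'a::field \<Rightarrow> 'a" where
  "tr t x = (\<Sum>k<t. x ^ (2 ^ k))"

definition Tr :: "nat \<Rightarrow> 'a::field \<Rightarrow> bool" where
  "Tr t x = (tr t x \<noteq> 0)"

definition self_dual_basis :: "nat \<Rightarrow> (nat \<Rightarrow> 'a::field) \<Rightarrow> bool" where
  "self_dual_basis t \<alpha> \<longleftrightarrow>
     (\<forall>i<t. \<forall>j<t. tr t (\<alpha> i * \<alpha> j) = (if i = j then 1 else 0))"

definition coords :: "nat \<Rightarrow> (nat \<Rightarrow> 'a::field) \<Rightarrow> 'a \<Rightarrow> nat \<Rightarrow> bool" where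
  "coords t \<alpha> x = (THE c. (\<forall>i\<ge>t. \<not> c i) \<and> x = (\<Sum>i<t. if c i then \<alpha> i else 0))"

definition wt :: "nat \<Rightarrow> (nat \<Rightarrow> 'a::field) \<Rightarrow> 'a \<Rightarrow> 'a \<Rightarrow> nat" where
  "wt t \<alpha> x y = card {i. i < t \<and> coords t \<alpha> x i} + card {i. i < t \<and> coords t \<alpha> y i}"

definition sgn2 :: "bool \<Rightarrow> complex" where
  "sgn2 b = (if b then -1 else 1)"

definition negabent :: "nat \<Rightarrow> (nat \<Rightarrow> 'a::{field,finite}) \<Rightarrow> ('a \<Rightarrow> 'a \<Rightarrow> bool) \<Rightarrow> bool" where
  "negabent t \<alpha> g \<longleftrightarrow>
     (\<forall>a b. cmod (\<Sum>(x,y)\<in>UNIV. sgn2 (g x y) * sgn2 (Tr t (a * x)) * sgn2 (Tr t (b * y))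
                                 * \<i> ^ wt t \<alpha> x y) = 2 ^ t)"

definition bent :: "nat \<Rightarrow> ('a::{field,finite} \<Rightarrow> bool) \<Rightarrow> bool" where
  "bent t u \<longleftrightarrow>
     (\<forall>\<mu>. cmod (\<Sum>y\<in>UNIV. sgn2 (u y) * sgn2 (Tr t (\<mu> * y))) = 2 powr (real t / 2))"

end

theory Submission
  imports Defs
begin

lemma fin_pow_card:
  fixes x :: "'a::{field,finite}"
  shows "x ^ card (UNIV::'a set) = x"
proof (cases "x = 0")
  case True
  have "card (UNIV::'a set) > 0" by (simp add: finite_UNIV_card_ge_0)
  then show ?thesis using True by (simp add: power_0_left)
next
  case False
  let ?A = "UNIV - {0::'a}"
  have bij: "bij_betw ((*) x) ?A ?A"
    by (rule bij_betw_byWitness[where f'="(*) (inverse x)"]) (auto simp: False)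
  have "(\<Prod>y\<in>?A. x * y) = (\<Prod>y\<in>?A. y)"
    using prod.reindex_bij_betw[OF bij, of "\<lambda>y. y"] by simp
  moreover have "(\<Prod>y\<in>?A. x * y) = x ^ card ?A * (\<Prod>y\<in>?A. y)"
    by (simp add: prod.distrib)
  moreover have "(\<Prod>y\<in>?A. y) \<noteq> 0" by simp
  ultimately have "x ^ card ?A = 1" by simp
  moreover have "card ?A = card (UNIV::'a set) - 1" by (simp add: card_Diff_singleton)
  moreover have "card (UNIV::'a set) > 0" by (simp add: finite_UNIV_card_ge_0)
  ultimately show ?thesis
    by (metis One_nat_def Suc_pred mult.right_neutral power_Suc)
qed

lemma card_times_one:
  "of_nat (card (UNIV::'a::{field,finite} set)) = (0::'a)"
proof -
  have bij: "bij_betw (\<lambda>y. y + 1) (UNIV::'a set) UNIV"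
    by (rule bij_betw_byWitness[where f'="\<lambda>y. y - 1"]) auto
  have "(\<Sum>y\<in>UNIV. y + (1::'a)) = (\<Sum>y\<in>UNIV. y)"
    using sum.reindex_bij_betw[OF bij, of "\<lambda>y. y"] by simp
  then show ?thesis by (simp add: sum.distrib)
qed

locale sdb =
  fixes t :: nat and \<alpha> :: "nat \<Rightarrow> 'a::{field,finite}"
  assumes t1: "t \<ge> 1" and card: "card (UNIV::'a set) = 2^t" and sd: "self_dual_basis t \<alpha>"
begin

lemma two0: "(2::'a) = 0"
proof -
  have "(of_nat (2^t)::'a) = 0" using card_times_one[where 'a='a] card by simp
  then have "(2::'a)^t = 0" by simp
  then show ?thesis by simp
qed

lemma add_self[simp]: "(x::'a) + x = 0"
  by (metis mult_2 mult_zero_left two0)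

lemma uminus_id[simp]: "-(x::'a) = x"
  by (metis add_self add.inverse_unique)

lemma diff_is_add[simp]: "(x::'a) - y = x + y"
  by (metis diff_conv_add_uminus uminus_id)

lemma frob2: "((x::'a) + y)^2 = x^2 + y^2"
  by (simp add: power2_sum) (metis mult_2 mult.assoc mult_zero_left two0 add_0_right)

lemma frob: "((x::'a) + y)^(2^k) = x^(2^k) + y^(2^k)"
proof (induction k)
  case 0 then show ?case by simp
next
  case (Suc k)
  have "(x+y)^(2^Suc k) = ((x+y)^(2^k))^2" by (simp add: power_mult[symmetric] mult.commute)
  also have "\<dots> = (x^(2^k))^2 + (y^(2^k))^2" using Suc frob2 by simp
  finally show ?case by (simp add: power_mult[symmetric] mult.commute)
qed

lemma frob_sum: "finite A \<Longrightarrow> (\<Sum>i\<in>A. f i)^(2^k) = (\<Sum>i\<in>A. (f i::'a)^(2^k))"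
  by (induction A rule: finite_induct) (simp_all add: frob)

lemma xq: "(x::'a)^(2^t) = x"
  using fin_pow_card[of x] card by simp

lemma tr_add: "tr t ((x::'a) + y) = tr t x + tr t y"
  unfolding tr_def by (simp add: frob sum.distrib)

lemma tr_sum: "finite A \<Longrightarrow> tr t (\<Sum>i\<in>A. f i) = (\<Sum>i\<in>A. tr t (f i::'a))"
proof (induction A rule: finite_induct)
  case empty
  have "(\<Sum>k<t. (0::'a)^(2^k)) = 0" by (intro sum.neutral) simp
  then show ?case by (simp add: tr_def)
next
  case (insert a A) then show ?case by (simp add: tr_add)
qed

lemma tr_sq_gen: "(tr t (x::'a))^2 = tr t (x^2)"
proof -
  have "(tr t x)^(2^1) = (\<Sum>k<t. (x^(2^k))^(2^1))" unfolding tr_def by (rule frob_sum) simp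
  then have "(tr t x)^2 = (\<Sum>k<t. (x^(2^k))^(2^1))" by simp
  also have "\<dots> = (\<Sum>k<t. (x^2)^(2^k))"
    by (intro sum.cong refl) (metis power_mult mult.commute power_one_right)
  finally show ?thesis unfolding tr_def .
qed

lemma tr_sq: "tr t ((x::'a)^2) = tr t x"
proof -
  have "(\<Sum>k<t. (x^2)^(2^k)) = (\<Sum>k<t. x^(2^Suc k))"
    by (intro sum.cong refl) (simp add: power_mult[symmetric] mult.commute)
  also have "\<dots> = (\<Sum>k<Suc t. x^(2^k)) - x"
    by (subst sum.lessThan_Suc_shift) (simp add: two0)
  also have "\<dots> = (\<Sum>k<t. x^(2^k)) + x^(2^t) - x" by simp
  also have "\<dots> = (\<Sum>k<t. x^(2^k))" using xq by (simp add: two0)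
  finally show ?thesis unfolding tr_def .
qed

lemma tr_pow: "tr t ((x::'a)^(2^k)) = tr t x"
proof (induction k)
  case 0 then show ?case by simp
next
  case (Suc k)
  have "x^(2^Suc k) = (x^(2^k))^2" by (simp add: power_mult[symmetric] mult.commute)
  then show ?case using Suc tr_sq by simp
qed

lemma tr01: "tr t (x::'a) = 0 \<or> tr t x = 1"
proof -
  have "(tr t x)*(tr t x) = tr t x * 1" using tr_sq_gen tr_sq by (simp add: power2_eq_square)
  then show ?thesis by (metis mult_left_cancel)
qed

lemma tr_of_Tr: "tr t (x::'a) = (if Tr t x then 1 else 0)"
  using tr01[of x] by (auto simp: Tr_def)

lemma Tr_add: "Tr t ((x::'a) + y) = (Tr t x \<noteq> Tr t y)"
proof -
  have "tr t (x+y) = (if Tr t x then 1 else 0) + (if Tr t y then 1 else 0)"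
    using tr_add[of x y] tr_of_Tr[of x] tr_of_Tr[of y] by simp
  then have "tr t (x+y) \<noteq> 0 \<longleftrightarrow> (Tr t x \<noteq> Tr t y)" by (cases "Tr t x"; cases "Tr t y") auto
  then show ?thesis unfolding Tr_def[of t "x+y"] .
qed

lemma sgn2_xor: "sgn2 (P \<noteq> Q) = sgn2 P * sgn2 Q"
  by (auto simp: sgn2_def)

lemma sgn2_sq[simp]: "sgn2 P * sgn2 P = 1"
  by (auto simp: sgn2_def)

lemma cnj_sgn2[simp]: "cnj (sgn2 P) = sgn2 P"
  by (auto simp: sgn2_def)


definition K :: "'a \<Rightarrow> nat set" where "K x = {k. k < t \<and> Tr t (x * \<alpha> k)}"
definition phi :: "nat set \<Rightarrow> 'a" where "phi S = (\<Sum>k\<in>S. \<alpha> k)"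

lemma K_sub: "K x \<subseteq> {..<t}" by (auto simp: K_def)
lemma finite_K[simp]: "finite (K x)" using K_sub finite_subset by blast

lemma of_nat_par: "(of_nat n :: 'a) = (if even n then 0 else 1)"
  by (induction n) auto

lemma tr_phi:
  assumes "S \<subseteq> {..<t}" "j < t"
  shows "tr t (phi S * \<alpha> j) = (if j \<in> S then 1 else 0)"
proof -
  have fS: "finite S" using assms(1) finite_subset by blast
  have "tr t (phi S * \<alpha> j) = (\<Sum>k\<in>S. tr t (\<alpha> k * \<alpha> j))"
    unfolding phi_def sum_distrib_right using tr_sum[OF fS] by simp
  also have "\<dots> = (\<Sum>k\<in>S. if k = j then 1 else 0)"
    using sd assms unfolding self_dual_basis_def by (intro sum.cong refl) auto
  also have "\<dots> = (if j \<in> S then 1 else 0)" using fS by simp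
  finally show ?thesis .
qed

lemma K_phi: assumes "S \<subseteq> {..<t}" shows "K (phi S) = S"
  using assms by (auto simp: K_def Tr_def tr_phi[OF assms] split: if_splits)

lemma phi_bij: "bij_betw phi (Pow {..<t}) (UNIV::'a set)"
proof -
  have inj: "inj_on phi (Pow {..<t})"
    by (rule inj_on_inverseI[where g=K]) (simp add: K_phi)
  have "card (phi ` Pow {..<t}) = card (Pow {..<(t::nat)})" using card_image[OF inj] .
  also have "\<dots> = 2^t" by (simp add: card_Pow)
  finally have "card (phi ` Pow {..<t}) = card (UNIV::'a set)" using card by simp
  then have "phi ` Pow {..<t} = UNIV" by (intro card_subset_eq) auto
  then show ?thesis using inj by (simp add: bij_betw_def)
qed

lemma phi_K: "phi (K x) = x"
proof -
  obtain S where "S \<in> Pow {..<t}" "x = phi S" using phi_bij unfolding bij_betw_def by blast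
  then show ?thesis using K_phi by auto
qed

lemma K_add: "K (x + y) = (K x - K y) \<union> (K y - K x)"
  unfolding K_def by (auto simp: distrib_right Tr_add)

lemma Tr_mult_K: "Tr t (x * c) \<longleftrightarrow> odd (card (K x \<inter> K c))"
proof -
  have "tr t (x * c) = tr t (phi (K x) * c)" by (simp add: phi_K)
  also have "\<dots> = (\<Sum>k\<in>K x. tr t (\<alpha> k * c))"
    unfolding phi_def sum_distrib_right using tr_sum[of "K x" "\<lambda>k. \<alpha> k * c"] by simp
  also have "\<dots> = (\<Sum>k\<in>K x. if k \<in> K c then 1 else 0)"
    using K_sub by (intro sum.cong refl) (auto simp: tr_of_Tr K_def mult.commute)
  also have "\<dots> = of_nat (card (K x \<inter> K c))"
    by (simp add: sum.If_cases Int_commute)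
  finally show ?thesis unfolding Tr_def of_nat_par by simp
qed

lemma coords_K: "coords t \<alpha> x = (\<lambda>k. k \<in> K x)"
  unfolding coords_def
proof (rule the_equality)
  show "(\<forall>i\<ge>t. \<not> i \<in> K x) \<and> x = (\<Sum>i<t. if i \<in> K x then \<alpha> i else 0)"
  proof
    show "\<forall>i\<ge>t. \<not> i \<in> K x" using K_sub by fastforce
    have "K x \<inter> {..<t} = K x" using K_sub by blast
    then show "x = (\<Sum>i<t. if i \<in> K x then \<alpha> i else 0)"
      using phi_K[of x] by (simp add: phi_def sum.If_cases Int_commute)
  qed
next
  fix c assume c: "(\<forall>i\<ge>t. \<not> c i) \<and> x = (\<Sum>i<t. if c i then \<alpha> i else 0)"
  let ?S = "{i. i < t \<and> c i}"
  have "x = phi ?S" using c by (simp add: phi_def sum.If_cases) (metis Collect_conj_eq lessThan_def Int_commute)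
  moreover have "?S \<subseteq> {..<t}" by auto
  ultimately have "K x = ?S" using K_phi by simp
  then show "c = (\<lambda>k. k \<in> K x)" using c by (auto simp: fun_eq_iff)
qed

lemma wt_K: "wt t \<alpha> x y = card (K x) + card (K y)"
proof -
  have "{i. i < t \<and> i \<in> K z} = K z" for z using K_sub by auto
  then show ?thesis unfolding wt_def coords_K by simp
qed


end
context sdb begin
lemma sgn2_odd: "sgn2 (odd n) = (-1)^n"
  by (auto simp: sgn2_def)

lemma prod_sign_i:
  assumes "finite S"
  shows "(\<Prod>k\<in>S. if k \<in> C then -\<i> else \<i>) = (-1)^card (S \<inter> C) * \<i>^card S"
proof -
  have "(\<Prod>k\<in>S. if k \<in> C then -\<i> else \<i>) = (-\<i>)^card (S \<inter> C) * \<i>^card (S - C)"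
    using assms by (simp add: prod.If_cases Diff_eq)
  moreover have "card S = card (S \<inter> C) + card (S - C)"
    using assms by (metis card_Int_Diff)
  then have "\<i>^card S = \<i>^card (S \<inter> C) * \<i>^card (S - C)" by (simp add: power_add)
  then have "(-1)^card (S \<inter> C) * \<i>^card S = ((-1) * \<i>)^card (S \<inter> C) * \<i>^card (S - C)"
    by (simp add: power_mult_distrib[symmetric])
  ultimately show ?thesis by simp
qed

lemma G_closed: "(\<Sum>x\<in>UNIV. sgn2 (Tr t (x * c)) * \<i>^card (K x)) = (1+\<i>)^t * (-\<i>)^card (K c)"
proof -
  let ?C = "K c"
  let ?f = "\<lambda>k. if k \<in> ?C then -\<i> else \<i>"
  have "(\<Sum>x\<in>UNIV. sgn2 (Tr t (x * c)) * \<i>^card (K x))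
      = (\<Sum>S\<in>Pow {..<t}. sgn2 (Tr t (phi S * c)) * \<i>^card (K (phi S)))"
    using sum.reindex_bij_betw[OF phi_bij, of "\<lambda>x. sgn2 (Tr t (x * c)) * \<i>^card (K x)"] by simp
  also have "\<dots> = (\<Sum>S\<in>Pow {..<t}. (\<Prod>k\<in>S. ?f k) * (\<Prod>k\<in>{..<t} - S. 1))"
  proof (intro sum.cong refl)
    fix S assume S: "S \<in> Pow {..<t}"
    then have "K (phi S) = S" using K_phi by auto
    moreover have "finite S" using S finite_subset by auto
    ultimately show "sgn2 (Tr t (phi S * c)) * \<i>^card (K (phi S)) = (\<Prod>k\<in>S. ?f k) * (\<Prod>k\<in>{..<t} - S. 1)"
      by (simp add: Tr_mult_K sgn2_odd prod_sign_i)
  qed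
  also have "\<dots> = (\<Prod>k<t. ?f k + 1)"
    by (rule prod_add[symmetric]) simp
  also have "\<dots> = (\<Prod>k<t. if k \<in> ?C then 1 - \<i> else 1 + \<i>)"
    by (intro prod.cong refl) auto
  also have "\<dots> = (1 - \<i>)^card ({..<t} \<inter> ?C) * (1 + \<i>)^card ({..<t} - ?C)"
    by (simp add: prod.If_cases Diff_eq)
  also have "{..<t} \<inter> ?C = ?C" using K_sub by blast
  also have "card ({..<t} - ?C) = t - card ?C" using K_sub by (simp add: card_Diff_subset)
  also have "(1 - \<i>) = (1 + \<i>) * (-\<i>)" by (simp add: algebra_simps)
  also have "((1 + \<i>) * (-\<i>))^card ?C * (1 + \<i>)^(t - card ?C) = (1+\<i>)^(card ?C + (t - card ?C)) * (-\<i>)^card ?C"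
    by (simp only: power_mult_distrib power_add mult_ac)
  also have "card ?C + (t - card ?C) = t"
    using card_mono[OF _ K_sub] by simp
  finally show ?thesis .
qed

lemma P_ident: "\<i>^card (K y) * (-\<i>)^card (K (y + e)) = (-\<i>)^card (K e) * sgn2 (Tr t (y * e))"
proof -
  let ?A = "K y" and ?B = "K e"
  have fA: "finite ?A" "finite ?B" by auto
  have d: "card (K (y+e)) + 2 * card (?A \<inter> ?B) = card ?A + card ?B"
  proof -
    have "card (K (y+e)) = card (?A - ?B) + card (?B - ?A)"
      unfolding K_add by (rule card_Un_disjoint) auto
    moreover have "card ?A = card (?A - ?B) + card (?A \<inter> ?B)" using fA by (metis card_Int_Diff Int_commute add.commute)
    moreover have "card ?B = card (?B - ?A) + card (?A \<inter> ?B)" using fA by (metis card_Int_Diff Int_commute add.commute)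
    ultimately show ?thesis by simp
  qed
  let ?m = "card (?A \<inter> ?B)"
  let ?a = "card ?A" and ?b = "card ?B" and ?d = "card (K (y+e))"
  have neg1: "(-1::complex)^?m = (-\<i>)^(2*?m)" by (simp add: power_mult)
  have "\<i>^?a * (-\<i>)^?d * (-1)^?m = \<i>^?a * ((-\<i>)^?d * (-\<i>)^(2*?m))"
    by (simp only: neg1 mult.assoc)
  also have "\<dots> = \<i>^?a * (-\<i>)^(?d + 2*?m)" by (simp only: power_add)
  also have "\<dots> = \<i>^?a * (-\<i>)^(?a + ?b)" by (simp only: d)
  also have "\<dots> = (\<i> * (-\<i>))^?a * (-\<i>)^?b" by (simp only: power_add power_mult_distrib mult_ac)
  also have "\<dots> = (-\<i>)^?b" by simp
  finally have 1: "\<i>^?a * (-\<i>)^?d * (-1)^?m = (-\<i>)^?b" .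
  have sg: "sgn2 (Tr t (y * e)) = (-1)^?m" by (simp add: Tr_mult_K sgn2_odd)
  have mm: "(-1::complex)^?m * (-1)^?m = 1" by (simp add: power_mult_distrib[symmetric])
  have "\<i>^?a * (-\<i>)^?d = \<i>^?a * (-\<i>)^?d * ((-1)^?m * (-1)^?m)" by (simp only: mm mult_1_right)
  also have "\<dots> = (\<i>^?a * (-\<i>)^?d * (-1)^?m) * (-1)^?m" by (simp only: mult.assoc)
  also have "\<dots> = (-\<i>)^?b * sgn2 (Tr t (y * e))" by (simp only: 1 sg)
  finally show ?thesis .
qed

lemma Tr0[simp]: "Tr t (0::'a) = False"
proof -
  have "(\<Sum>k<t. (0::'a)^(2^k)) = 0" by (intro sum.neutral) simp
  then show ?thesis by (simp add: Tr_def tr_def)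
qed

lemma add_eq0_iff: "(x::'a) + y = 0 \<longleftrightarrow> x = y"
  by (metis add_self add_left_cancel)

lemma chi_add: "sgn2 (Tr t (b * (y + e))) = sgn2 (Tr t (b * y)) * sgn2 (Tr t (b * (e::'a)))"
  by (simp only: distrib_left Tr_add sgn2_xor)

lemma Tr_aa: "Tr t (\<alpha> 0 * \<alpha> 0)"
  using sd t1 unfolding self_dual_basis_def Tr_def by auto

lemma orth: "(\<Sum>b\<in>UNIV. sgn2 (Tr t (b * (e::'a)))) = (if e = 0 then 2^t else 0)"
proof (cases "e = 0")
  case True then show ?thesis using card by (simp add: sgn2_def)
next
  case False
  define b0 where "b0 = \<alpha> 0 * \<alpha> 0 / e"
  have b0: "sgn2 (Tr t (b0 * e)) = -1" using Tr_aa False by (simp add: b0_def sgn2_def)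
  have bij: "bij_betw (\<lambda>b. b + b0) (UNIV::'a set) UNIV"
    by (rule bij_betw_byWitness[where f'="\<lambda>b. b + b0"]) (auto simp: add.assoc)
  have "(\<Sum>b\<in>UNIV. sgn2 (Tr t (b * e))) = (\<Sum>b\<in>UNIV. sgn2 (Tr t ((b + b0) * e)))"
    using sum.reindex_bij_betw[OF bij, of "\<lambda>b. sgn2 (Tr t (b * e))"] by simp
  also have "\<dots> = (\<Sum>b\<in>UNIV. - sgn2 (Tr t (b * e)))"
    by (intro sum.cong refl) (simp only: distrib_right Tr_add sgn2_xor b0, simp)
  finally have "(\<Sum>b\<in>UNIV. sgn2 (Tr t (b * e))) = 0"
    by (simp add: sum_negf)
  then show ?thesis using False by simp
qed

definition W :: "('a \<Rightarrow> complex) \<Rightarrow> 'a \<Rightarrow> complex" where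
  "W F b = (\<Sum>y\<in>UNIV. F y * sgn2 (Tr t (b * y)))"
definition AC :: "('a \<Rightarrow> complex) \<Rightarrow> 'a \<Rightarrow> complex" where
  "AC F e = (\<Sum>y\<in>UNIV. F y * cnj (F (y + e)))"

lemma W_sq: "W F b * cnj (W F b) = (\<Sum>e\<in>UNIV. sgn2 (Tr t (b * e)) * AC F e)"
proof -
  have "W F b * cnj (W F b) = (\<Sum>y\<in>UNIV. \<Sum>z\<in>UNIV. (F y * sgn2 (Tr t (b * y))) * cnj (F z * sgn2 (Tr t (b * z))))"
    unfolding W_def cnj_sum sum_product ..
  also have "\<dots> = (\<Sum>y\<in>UNIV. \<Sum>e\<in>UNIV. (F y * sgn2 (Tr t (b * y))) * cnj (F (y+e) * sgn2 (Tr t (b * (y+e)))))"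
  proof (rule sum.cong[OF refl])
    fix y
    have bij: "bij_betw (\<lambda>e. y + e) (UNIV::'a set) UNIV"
      by (rule bij_betw_byWitness[where f'="\<lambda>z. y + z"]) (auto simp: add.assoc[symmetric])
    show "(\<Sum>z\<in>UNIV. (F y * sgn2 (Tr t (b * y))) * cnj (F z * sgn2 (Tr t (b * z))))
        = (\<Sum>e\<in>UNIV. (F y * sgn2 (Tr t (b * y))) * cnj (F (y+e) * sgn2 (Tr t (b * (y+e)))))"
      using sum.reindex_bij_betw[OF bij, of "\<lambda>z. (F y * sgn2 (Tr t (b * y))) * cnj (F z * sgn2 (Tr t (b * z)))"]
      by simp
  qed
  also have "\<dots> = (\<Sum>y\<in>UNIV. \<Sum>e\<in>UNIV. sgn2 (Tr t (b * e)) * (F y * cnj (F (y+e))))"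
  proof (intro sum.cong refl)
    fix y e
    have "(F y * sgn2 (Tr t (b * y))) * cnj (F (y+e) * sgn2 (Tr t (b * (y+e))))
        = (sgn2 (Tr t (b * y)) * sgn2 (Tr t (b * y))) * sgn2 (Tr t (b * e)) * (F y * cnj (F (y+e)))"
      by (simp only: chi_add complex_cnj_mult cnj_sgn2 mult_ac)
    then show "(F y * sgn2 (Tr t (b * y))) * cnj (F (y+e) * sgn2 (Tr t (b * (y+e))))
        = sgn2 (Tr t (b * e)) * (F y * cnj (F (y+e)))" by simp
  qed
  also have "\<dots> = (\<Sum>e\<in>UNIV. sgn2 (Tr t (b * e)) * AC F e)"
    unfolding AC_def sum_distrib_left by (rule sum.swap)
  finally show ?thesis .
qed

lemma L_equiv:
  assumes F1: "\<And>y. cmod (F y) = 1"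
  shows "(\<forall>b. W F b * cnj (W F b) = 2^t) \<longleftrightarrow> (\<forall>e. e \<noteq> 0 \<longrightarrow> AC F e = 0)"
proof
  assume A: "\<forall>e. e \<noteq> 0 \<longrightarrow> AC F e = 0"
  have FF: "F y * cnj (F y) = 1" for y
    using complex_norm_square[of "F y"] F1[of y] by simp
  have AC0: "AC F 0 = 2^t" unfolding AC_def using card by (simp add: FF)
  show "\<forall>b. W F b * cnj (W F b) = 2^t"
  proof
    fix b
    have "W F b * cnj (W F b) = (\<Sum>e\<in>UNIV. sgn2 (Tr t (b * e)) * AC F e)" by (rule W_sq)
    also have "\<dots> = sgn2 (Tr t (b * 0)) * AC F 0"
      by (rule sum.mono_neutral_right[of UNIV "{0}", simplified]) (auto simp: A)
    also have "\<dots> = 2^t" using AC0 by (simp add: sgn2_def)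
    finally show "W F b * cnj (W F b) = 2^t" .
  qed
next
  assume A: "\<forall>b. W F b * cnj (W F b) = 2^t"
  show "\<forall>e. e \<noteq> 0 \<longrightarrow> AC F e = 0"
  proof (intro allI impI)
    fix e' :: 'a assume e': "e' \<noteq> 0"
    have "(\<Sum>b\<in>UNIV. sgn2 (Tr t (b * e')) * (W F b * cnj (W F b))) = 0"
      using A orth[of e'] e' by (simp add: sum_distrib_right[symmetric])
    moreover have "(\<Sum>b\<in>UNIV. sgn2 (Tr t (b * e')) * (W F b * cnj (W F b)))
        = (\<Sum>e\<in>UNIV. AC F e * (\<Sum>b\<in>UNIV. sgn2 (Tr t (b * (e + e')))))"
    proof -
      have "(\<Sum>b\<in>UNIV. sgn2 (Tr t (b * e')) * (W F b * cnj (W F b)))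
          = (\<Sum>b\<in>UNIV. \<Sum>e\<in>UNIV. AC F e * sgn2 (Tr t (b * (e + e'))))"
        by (simp add: W_sq sum_distrib_left chi_add mult_ac)
      also have "\<dots> = (\<Sum>e\<in>UNIV. AC F e * (\<Sum>b\<in>UNIV. sgn2 (Tr t (b * (e + e')))))"
        by (subst sum.swap) (simp add: sum_distrib_left)
      finally show ?thesis .
    qed
    moreover have "\<dots> = AC F e' * 2^t"
    proof -
      have "(\<Sum>e\<in>UNIV. AC F e * (\<Sum>b\<in>UNIV. sgn2 (Tr t (b * (e + e')))))
          = (\<Sum>e\<in>UNIV. if e = e' then AC F e * 2^t else 0)"
        by (intro sum.cong refl) (simp add: orth add_eq0_iff)
      then show ?thesis by simp
    qed
    ultimately show "AC F e' = 0" by simp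
  qed
qed

lemma cnj_i_pow: "cnj (\<i>^n) = (-\<i>)^n" by simp
lemma cnj_mi_pow: "cnj ((-\<i>)^n) = \<i>^n" by simp

lemma Tr_frob: "Tr t ((x::'a)^(2^k)) = Tr t x"
  by (simp add: Tr_def tr_pow)

definition Fa :: "('a \<Rightarrow> bool) \<Rightarrow> nat \<Rightarrow> 'a \<Rightarrow> 'a \<Rightarrow> complex" where
  "Fa u k a y = sgn2 (u y) * \<i>^card (K y) * (-\<i>)^card (K (y^(2^k) + a))"

lemma N_eq:
  "(\<Sum>(x,y)\<in>UNIV. sgn2 (Tr t (x * y^(2^k) + h y)) * sgn2 (Tr t (a * x)) * sgn2 (Tr t (b * y)) * \<i> ^ wt t \<alpha> x y)
   = (1+\<i>)^t * W (Fa (\<lambda>y. Tr t (h y)) k a) b"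
proof -
  have "(\<Sum>(x,y)\<in>UNIV. sgn2 (Tr t (x * y^(2^k) + h y)) * sgn2 (Tr t (a * x)) * sgn2 (Tr t (b * y)) * \<i> ^ wt t \<alpha> x y)
      = (\<Sum>x\<in>UNIV. \<Sum>y\<in>UNIV. sgn2 (Tr t (x * y^(2^k) + h y)) * sgn2 (Tr t (a * x)) * sgn2 (Tr t (b * y)) * \<i> ^ wt t \<alpha> x y)"
    by (simp add: sum.cartesian_product UNIV_Times_UNIV[symmetric] del: UNIV_Times_UNIV)
  also have "\<dots> = (\<Sum>y\<in>UNIV. \<Sum>x\<in>UNIV. (sgn2 (Tr t (h y)) * sgn2 (Tr t (b * y)) * \<i>^card (K y)) * (sgn2 (Tr t (x * (y^(2^k) + a))) * \<i>^card (K x)))"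
  proof (subst sum.swap, intro sum.cong refl)
    fix x y
    have "sgn2 (Tr t (x * y^(2^k) + h y)) * sgn2 (Tr t (a * x)) = sgn2 (Tr t (h y)) * sgn2 (Tr t (x * (y^(2^k) + a)))"
    proof -
      have e1: "sgn2 (Tr t (x * y^(2^k) + h y)) = sgn2 (Tr t (x * y^(2^k))) * sgn2 (Tr t (h y))"
        by (simp only: Tr_add sgn2_xor)
      have e2: "sgn2 (Tr t (x * (y^(2^k) + a))) = sgn2 (Tr t (x * y^(2^k))) * sgn2 (Tr t (x * a))"
        by (simp only: distrib_left Tr_add sgn2_xor)
      have e3: "a * x = x * a" by (rule mult.commute)
      show ?thesis unfolding e1 e2 e3 by (simp only: mult_ac)
    qed
    then show "sgn2 (Tr t (x * y^(2^k) + h y)) * sgn2 (Tr t (a * x)) * sgn2 (Tr t (b * y)) * \<i> ^ wt t \<alpha> x y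
      = (sgn2 (Tr t (h y)) * sgn2 (Tr t (b * y)) * \<i>^card (K y)) * (sgn2 (Tr t (x * (y^(2^k) + a))) * \<i>^card (K x))"
      by (simp add: wt_K power_add mult_ac)
  qed
  also have "\<dots> = (\<Sum>y\<in>UNIV. (sgn2 (Tr t (h y)) * sgn2 (Tr t (b * y)) * \<i>^card (K y)) * ((1+\<i>)^t * (-\<i>)^card (K (y^(2^k) + a))))"
    by (simp add: sum_distrib_left[symmetric] G_closed)
  also have "\<dots> = (1+\<i>)^t * W (Fa (\<lambda>y. Tr t (h y)) k a) b"
    unfolding W_def Fa_def sum_distrib_left by (intro sum.cong refl) (simp add: mult_ac)
  finally show ?thesis .
qed

lemma Fa_norm: "cmod (Fa u k a y) = 1"
  by (simp add: Fa_def norm_mult norm_power sgn2_def)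

lemma AC_Fa: "AC (Fa u k a) e = ((-\<i>)^card (K e) * \<i>^card (K (e^(2^k))) * sgn2 (Tr t (a * e^(2^k))))
    * AC (\<lambda>y. sgn2 (u y)) e"
proof -
  have "Fa u k a y * cnj (Fa u k a (y + e)) = ((-\<i>)^card (K e) * \<i>^card (K (e^(2^k))) * sgn2 (Tr t (a * e^(2^k))))
    * (sgn2 (u y) * cnj (sgn2 (u (y + e))))" for y
  proof -
    let ?z = "y^(2^k) + a" and ?e = "e^(2^k)"
    have z: "(y + e)^(2^k) + a = ?z + ?e" by (simp add: frob ac_simps)
    have p1: "\<i>^card (K y) * (-\<i>)^card (K (y + e)) = (-\<i>)^card (K e) * sgn2 (Tr t (y * e))"
      by (rule P_ident)
    have p2: "(-\<i>)^card (K ?z) * \<i>^card (K (?z + ?e)) = \<i>^card (K ?e) * sgn2 (Tr t (?z * ?e))"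
      using arg_cong[OF P_ident[of ?z ?e], of cnj] by (simp only: complex_cnj_mult cnj_i_pow cnj_mi_pow cnj_sgn2)
    have s: "sgn2 (Tr t (?z * ?e)) = sgn2 (Tr t (y * e)) * sgn2 (Tr t (a * ?e))"
    proof -
      have "?z * ?e = (y * e)^(2^k) + a * ?e" by (simp only: distrib_right power_mult_distrib)
      then show ?thesis by (simp only: Tr_add sgn2_xor Tr_frob)
    qed
    have "Fa u k a y * cnj (Fa u k a (y + e)) = sgn2 (u y) * sgn2 (u (y+e))
        * (\<i>^card (K y) * (-\<i>)^card (K (y + e))) * ((-\<i>)^card (K ?z) * \<i>^card (K (?z + ?e)))"
      unfolding Fa_def z by (simp add: cnj_i_pow cnj_mi_pow mult_ac)
    also have "\<dots> = sgn2 (u y) * sgn2 (u (y+e)) * ((-\<i>)^card (K e) * sgn2 (Tr t (y * e)))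
        * (\<i>^card (K ?e) * (sgn2 (Tr t (y * e)) * sgn2 (Tr t (a * ?e))))"
      by (simp only: p1 p2 s)
    also have "\<dots> = ((-\<i>)^card (K e) * \<i>^card (K ?e) * sgn2 (Tr t (a * ?e)))
        * (sgn2 (u y) * sgn2 (u (y+e))) * (sgn2 (Tr t (y * e)) * sgn2 (Tr t (y * e)))"
      by (simp only: mult_ac)
    also have "\<dots> = ((-\<i>)^card (K e) * \<i>^card (K ?e) * sgn2 (Tr t (a * ?e)))
        * (sgn2 (u y) * cnj (sgn2 (u (y+e))))"
      by simp
    finally show ?thesis .
  qed
  then show ?thesis unfolding AC_def sum_distrib_left by simp
qed

lemma main:
  fixes h :: "'a \<Rightarrow> 'a" and i :: nat
  shows "negabent t \<alpha> (\<lambda>x y. Tr t (x * y ^ (2 ^ i) + h y)) \<longleftrightarrow> bent t (\<lambda>y. Tr t (h y))"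
proof -
  define s :: real where "s = 2 powr (real t / 2)"
  have s0: "s > 0" by (simp add: s_def)
  have s2: "s^2 = 2^t"
    unfolding s_def by (simp add: powr_realpow[symmetric] powr_powr[symmetric] power2_eq_square powr_add[symmetric])
  have c1: "cmod ((1+\<i>)^t) = s"
  proof -
    have n: "cmod (1+\<i>) = sqrt 2" by (simp add: cmod_def)
    have e0: "(sqrt 2 ^ t)^2 = (sqrt 2 ^ 2)^t" by (metis power_mult mult.commute)
    have e: "(sqrt 2 ^ t)^2 = s^2" unfolding e0 s2 by simp
    have p: "0 \<le> sqrt 2 ^ t" by simp
    have "sqrt 2 ^ t = s" using power2_eq_imp_eq[OF e p] s0 by linarith
    then show ?thesis by (simp add: norm_power n)
  qed
  have key: "cmod w = s \<longleftrightarrow> w * cnj w = 2^t" for w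
  proof -
    have "w * cnj w = 2^t \<longleftrightarrow> complex_of_real ((cmod w)^2) = complex_of_real (2^t)"
      by (simp add: complex_norm_square[symmetric])
    also have "\<dots> \<longleftrightarrow> (cmod w)^2 = s^2" using s2 by (simp only: of_real_eq_iff)
    also have "\<dots> \<longleftrightarrow> cmod w = s" using s0 by (simp add: power2_eq_iff_nonneg)
    finally show ?thesis by simp
  qed
  let ?u = "\<lambda>y. Tr t (h y)"
  let ?U = "\<lambda>y. sgn2 (?u y)"
  have "negabent t \<alpha> (\<lambda>x y. Tr t (x * y ^ (2 ^ i) + h y))
      \<longleftrightarrow> (\<forall>a b. cmod ((1+\<i>)^t * W (Fa ?u i a) b) = 2^t)"
    unfolding negabent_def N_eq ..
  also have "\<dots> \<longleftrightarrow> (\<forall>a b. W (Fa ?u i a) b * cnj (W (Fa ?u i a) b) = 2^t)"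
  proof -
    have "cmod ((1+\<i>)^t * w) = 2^t \<longleftrightarrow> cmod w = s" for w
    proof -
      have "cmod ((1+\<i>)^t * w) = s * cmod w" by (simp add: norm_mult c1)
      moreover have "(2::real)^t = s * s" using s2 by (simp add: power2_eq_square)
      ultimately show ?thesis using s0 by simp
    qed
    then show ?thesis by (simp only: key)
  qed
  also have "\<dots> \<longleftrightarrow> (\<forall>a. \<forall>e. e \<noteq> 0 \<longrightarrow> AC (Fa ?u i a) e = 0)"
  proof -
    have "(\<forall>b. W (Fa ?u i a) b * cnj (W (Fa ?u i a) b) = 2^t) \<longleftrightarrow> (\<forall>e. e \<noteq> 0 \<longrightarrow> AC (Fa ?u i a) e = 0)" for a
      by (rule L_equiv) (rule Fa_norm)
    then show ?thesis by blast
  qed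
  also have "\<dots> \<longleftrightarrow> (\<forall>e. e \<noteq> 0 \<longrightarrow> AC ?U e = 0)"
  proof -
    have "AC (Fa ?u i a) e = 0 \<longleftrightarrow> AC ?U e = 0" for a e
      unfolding AC_Fa by (simp add: sgn2_def)
    then show ?thesis by blast
  qed
  also have "\<dots> \<longleftrightarrow> (\<forall>b. W ?U b * cnj (W ?U b) = 2^t)"
    using L_equiv[of ?U] by (simp add: sgn2_def)
  also have "\<dots> \<longleftrightarrow> bent t ?u"
    unfolding bent_def W_def key[symmetric] s_def ..
  finally show ?thesis .
qed

end

theorem theorem6:
  fixes t i :: nat and h :: "'a::{field,finite} \<Rightarrow> 'a" and \<alpha> :: "nat \<Rightarrow> 'a"
  assumes "t \<ge> 1" and "card (UNIV :: 'a set) = 2 ^ t"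
    and "self_dual_basis t \<alpha>"
  shows "negabent t \<alpha> (\<lambda>x y. Tr t (x * y ^ (2 ^ i) + h y)) \<longleftrightarrow> bent t (\<lambda>y. Tr t (h y))"
proof -
  interpret sdb t \<alpha> using assms by unfold_locales
  show ?thesis by (rule main)
qed

end
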